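(* Let $N\ge2$, $p\in(1,\infty)\setminus\{2\}$, and assume $(p-1)(N-1)>1$ if $p>2$. Let $u:\mathbb{R}^N\to[0,\infty)$ be a nonnegative viscosity solution of $$-\widetilde\Delta_p u\ge u^q+|Du|^\gamma\quad\text{in }\mathbb{R}^N.$$ If $p>2$, $1<\gamma\le\frac{(p-1)(N-1)+1}{(p-1)(N-1)}$ and $q>\frac{(p-1)(N-1)+1}{(p-1)(N-1)-1}$, then $u$ is constant. If $1<p<2$, $1<\gamma\le\frac{N+p-2}{N-1}$ and $q>\frac{N+p-2}{N-p}$, then $u$ is constant.
   Context: The normalized $p$-Laplacian is $-\widetilde\Delta_p u=-\frac1p|Du|^{2-p}\mathrm{div}(|Du|^{p-2}Du)=-\mathrm{Tr}(A(Du)D^2u)$, where $A(\xi)=\frac1p\big(I_N+(p-2)\frac{\xi\otimes\xi}{|\xi|^2}\big)$ for $\xi\ne0$. Viscosity supersolutions of $-\widetilde\Delta_p u\ge H(u,Du)$ are defined in the standard way for discontinuous operators: $u$ is lower semicontinuous and whenever $\varphi\in C^2$ and $u-\varphi$ has a local minimum at $x_0$, $G^*(D\varphi(x_0),D^2\varphi(x_0))\ge H(u(x_0),D\varphi(x_0))$, where $G^*$ is the upper semicontinuous envelope of $(\xi,X)\mapsto-\mathrm{Tr}(A(\xi)X)$. *)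

theory Defs
  imports "HOL-Analysis.Analysis"
begin

definition lsc :: "('a::topological_space \<Rightarrow> real) \<Rightarrow> bool" where
  "lsc u \<longleftrightarrow> (\<forall>x t. t < u x \<longrightarrow> (\<forall>\<^sub>F y in at x. t < u y))"

definition C2_with :: "(real^'n \<Rightarrow> real) \<Rightarrow> (real^'n \<Rightarrow> real^'n) \<Rightarrow> (real^'n \<Rightarrow> real^'n^'n) \<Rightarrow> bool" where
  "C2_with phi Dphi D2phi \<longleftrightarrow>
     (\<forall>x. (phi has_derivative (\<lambda>h. Dphi x \<bullet> h)) (at x)) \<and> continuous_on UNIV Dphi \<and>
     (\<forall>x. (Dphi has_derivative (\<lambda>h. D2phi x *v h)) (at x)) \<and> continuous_on UNIV D2phi"

text \<open>The matrix A(xi) of the normalized p-Laplacian, for xi \<noteq> 0.\<close>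
definition Amat :: "real \<Rightarrow> real^'n \<Rightarrow> real^'n^'n" where
  "Amat p \<xi> = (1/p) *\<^sub>R (mat 1 + ((p - 2) / (norm \<xi>)\<^sup>2) *\<^sub>R (\<chi> i j. \<xi>$i * \<xi>$j))"

definition Gop :: "real \<Rightarrow> real^'n \<Rightarrow> real^'n^'n \<Rightarrow> real" where
  "Gop p \<xi> X = - trace (Amat p \<xi> ** X)"

text \<open>Upper semicontinuous envelope of G (G being defined on xi \<noteq> 0).\<close>
definition Gstar :: "real \<Rightarrow> real^'n \<Rightarrow> real^'n^'n \<Rightarrow> ereal" where
  "Gstar p \<xi> X = Limsup (at (\<xi>, X) within {z. fst z \<noteq> 0}) (\<lambda>z. ereal (Gop p (fst z) (snd z)))"

definition visc_super :: "real \<Rightarrow> (real \<Rightarrow> real^'n \<Rightarrow> real) \<Rightarrow> (real^'n \<Rightarrow> real) \<Rightarrow> bool" where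
  "visc_super p H u \<longleftrightarrow> lsc u \<and>
     (\<forall>phi Dphi D2phi x0. C2_with phi Dphi D2phi \<longrightarrow>
        (\<exists>e>0. \<forall>y\<in>ball x0 e. u y - phi y \<ge> u x0 - phi x0) \<longrightarrow>
        Gstar p (Dphi x0) (D2phi x0) \<ge> ereal (H (u x0) (Dphi x0)))"

end

theory Submission
  imports Defs
begin

lemma deriv_Un:
  fixes f :: "real \<Rightarrow> real"
  assumes "(f has_field_derivative D) (at x within {..x})" "(f has_field_derivative D) (at x within {x..})"
  shows "(f has_field_derivative D) (at x)"
proof -
  have "{..x} \<union> {x..} = (UNIV::real set)" by auto
  then show ?thesis using assms unfolding has_field_derivative_iff
    by (metis Lim_within_Un)
qed

definition glue :: "real \<Rightarrow> real \<Rightarrow> (real \<Rightarrow> real) \<Rightarrow> (real \<Rightarrow> real) \<Rightarrow> (real \<Rightarrow> real) \<Rightarrow> real \<Rightarrow> real" where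
  "glue a b f g h x = (if x < a then f x else if b < x then h x else g x)"

lemma deriv_glue:
  fixes f g h f' g' h' :: "real \<Rightarrow> real"
  assumes ab: "a < b"
    and df: "\<And>x. (f has_field_derivative f' x) (at x)"
    and dh: "\<And>x. (h has_field_derivative h' x) (at x)"
    and dg: "\<And>x. x \<in> {a..b} \<Longrightarrow> (g has_field_derivative g' x) (at x within {a..b})"
    and e1: "f a = g a" and e2: "h b = g b" and e3: "f' a = g' a" and e4: "h' b = g' b"
  shows "(glue a b f g h has_field_derivative glue a b f' g' h' x) (at x)"
proof -
  consider "x < a" | "b < x" | "a < x \<and> x < b" | "x = a" | "x = b" using ab by linarith
  then show ?thesis
  proof cases
    case 1
    have "(glue a b f g h has_field_derivative f' x) (at x)"
      apply (rule has_field_derivative_transform_within_open[OF df, where S="{..<a}"])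
      using 1 by (auto simp: glue_def)
    then show ?thesis using 1 by (simp add: glue_def)
  next
    case 2
    have "(glue a b f g h has_field_derivative h' x) (at x)"
      apply (rule has_field_derivative_transform_within_open[OF dh, where S="{b<..}"])
      using 2 ab by (auto simp: glue_def)
    then show ?thesis using 2 ab by (simp add: glue_def)
  next
    case 3
    have "(g has_field_derivative g' x) (at x within {a..b})" using 3 by (intro dg) auto
    then have d3: "(g has_field_derivative g' x) (at x)" using 3
      by (simp add: at_within_Icc_at)
    have "(glue a b f g h has_field_derivative g' x) (at x)"
      apply (rule has_field_derivative_transform_within_open[OF d3, where S="{a<..<b}"])
      using 3 by (auto simp: glue_def)
    then show ?thesis using 3 by (simp add: glue_def)
  next
    case 4
    have L: "(glue a b f g h has_field_derivative g' a) (at a within {..a})"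
    proof -
      have "(f has_field_derivative g' a) (at a within {..a})"
        using df has_field_derivative_at_within e3 by metis
      then show ?thesis
        apply (rule has_field_derivative_transform_within[where d=1])
        using e1 e3 ab by (auto simp: glue_def)
    qed
    have R: "(glue a b f g h has_field_derivative g' a) (at a within {a..})"
    proof -
      have "(g has_field_derivative g' a) (at a within {a..b})" using ab by (intro dg) auto
      moreover have "at a within {a..b} = at a within {a..}"
        by (rule at_within_nhd[where S="{..<b}"]) (use ab in auto)
      ultimately have "(g has_field_derivative g' a) (at a within {a..})" by simp
      then show ?thesis
        apply (rule has_field_derivative_transform_within[where d="b-a"])
        using ab by (auto simp: glue_def dist_real_def)
    qed
    have "(glue a b f g h has_field_derivative g' a) (at a)"
      using L R by (rule deriv_Un)
    moreover have "glue a b f' g' h' a = g' a" using ab by (simp add: glue_def)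
    ultimately show ?thesis using 4 by simp
  next
    case 5
    have R: "(glue a b f g h has_field_derivative g' b) (at b within {b..})"
    proof -
      have "(h has_field_derivative g' b) (at b within {b..})"
        using dh has_field_derivative_at_within e4 by metis
      then show ?thesis
        apply (rule has_field_derivative_transform_within[where d=1])
        using e2 e4 ab by (auto simp: glue_def)
    qed
    have L: "(glue a b f g h has_field_derivative g' b) (at b within {..b})"
    proof -
      have "(g has_field_derivative g' b) (at b within {a..b})" using ab by (intro dg) auto
      moreover have "at b within {a..b} = at b within {..b}"
        by (rule at_within_nhd[where S="{a<..}"]) (use ab in auto)
      ultimately have "(g has_field_derivative g' b) (at b within {..b})" by simp
      then show ?thesis
        apply (rule has_field_derivative_transform_within[where d="b-a"])
        using ab by (auto simp: glue_def dist_real_def)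
    qed
    have "(glue a b f g h has_field_derivative g' b) (at b)"
      using L R by (rule deriv_Un)
    moreover have "glue a b f' g' h' b = g' b" using ab by (simp add: glue_def)
    ultimately show ?thesis using 5 by simp
  qed
qed


definition outer :: "real^'n \<Rightarrow> real^'n^'n" where
  "outer v = (\<chi> i j. v$i * v$j)"

lemma outer_mult: "outer v *v h = (v \<bullet> h) *\<^sub>R v"
  by (simp add: outer_def vec_eq_iff matrix_vector_mult_def inner_vec_def sum_distrib_left
      sum_distrib_right mult.commute mult.left_commute)

lemma normsq_deriv:
  fixes c :: "real^'n"
  shows "((\<lambda>y. norm (y - c)^2) has_derivative (\<lambda>h. 2 * ((y - c) \<bullet> h))) (at y)"
proof -
  have "((\<lambda>y. (y - c) \<bullet> (y - c)) has_derivative (\<lambda>h. (y - c) \<bullet> h + h \<bullet> (y - c))) (at y)"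
    by (auto intro!: derivative_eq_intros)
  then show ?thesis
    by (simp add: power2_norm_eq_inner inner_commute)
qed

lemma radial_C2:
  fixes c :: "real^'n" and G G1 G2 :: "real \<Rightarrow> real"
  assumes d1: "\<And>s. (G has_real_derivative G1 s) (at s)"
    and d2: "\<And>s. (G1 has_real_derivative G2 s) (at s)"
    and c2: "continuous_on UNIV G2"
  shows "C2_with (\<lambda>y. G (norm (y - c)^2))
     (\<lambda>y. (2 * G1 (norm (y - c)^2)) *\<^sub>R (y - c))
     (\<lambda>y. (2 * G1 (norm (y - c)^2)) *\<^sub>R mat 1 + (4 * G2 (norm (y - c)^2)) *\<^sub>R outer (y - c))"
proof -
  have c1: "continuous_on UNIV G1"
    using d2 by (meson DERIV_isCont continuous_at_imp_continuous_on)
  have A: "((\<lambda>y. G (norm (y - c)^2)) has_derivative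
        (\<lambda>h. ((2 * G1 (norm (y - c)^2)) *\<^sub>R (y - c)) \<bullet> h)) (at y)" for y
  proof -
    have "((\<lambda>y. G (norm (y - c)^2)) has_derivative (\<lambda>h. G1 (norm (y - c)^2) * (2 * ((y - c) \<bullet> h)))) (at y)"
      using has_derivative_compose[OF normsq_deriv[of c y] d1[unfolded has_field_derivative_def]]
      by (simp add: mult.commute)
    then show ?thesis by (simp add: algebra_simps)
  qed
  have B: "((\<lambda>y. (2 * G1 (norm (y - c)^2)) *\<^sub>R (y - c)) has_derivative
     (\<lambda>h. ((2 * G1 (norm (y - c)^2)) *\<^sub>R mat 1 + (4 * G2 (norm (y - c)^2)) *\<^sub>R outer (y - c)) *v h)) (at y)" for y
  proof -
    have g1: "((\<lambda>y. 2 * G1 (norm (y - c)^2)) has_derivative (\<lambda>h. 2 * (G2 (norm (y - c)^2) * (2 * ((y - c) \<bullet> h))))) (at y)"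
      using has_derivative_compose[OF normsq_deriv[of c y] d2[unfolded has_field_derivative_def]]
      by (intro has_derivative_mult_right) (simp add: mult.commute)
    have g2: "((\<lambda>y. y - c) has_derivative (\<lambda>h. h)) (at y)"
      by (auto intro!: derivative_eq_intros)
    have "((\<lambda>y. (2 * G1 (norm (y - c)^2)) *\<^sub>R (y - c)) has_derivative
      (\<lambda>h. (2 * G1 (norm (y - c)^2)) *\<^sub>R h + (2 * (G2 (norm (y - c)^2) * (2 * ((y - c) \<bullet> h)))) *\<^sub>R (y - c))) (at y)"
      using has_derivative_scaleR[OF g1 g2] by simp
    moreover have "(\<lambda>h. (2 * G1 (norm (y - c)^2)) *\<^sub>R h + (2 * (G2 (norm (y - c)^2) * (2 * ((y - c) \<bullet> h)))) *\<^sub>R (y - c))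
       = (\<lambda>h. ((2 * G1 (norm (y - c)^2)) *\<^sub>R mat 1 + (4 * G2 (norm (y - c)^2)) *\<^sub>R outer (y - c)) *v h)"
      by (rule ext) (simp add: matrix_vector_mult_add_rdistrib scaleR_matrix_vector_assoc[symmetric] outer_mult)
    ultimately show ?thesis by simp
  qed
  have C: "continuous_on UNIV (\<lambda>y. (2 * G1 (norm (y - c)^2)) *\<^sub>R (y - c))"
    by (intro continuous_intros continuous_on_compose2[OF c1]) auto
  have D: "continuous_on UNIV (\<lambda>y::real^'n. (2 * G1 (norm (y - c)^2)) *\<^sub>R mat 1 + (4 * G2 (norm (y - c)^2)) *\<^sub>R outer (y - c))"
    unfolding outer_def
    by (intro continuous_intros continuous_on_compose2[OF c1] continuous_on_compose2[OF c2]) auto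
  show ?thesis unfolding C2_with_def using A B C D by blast
qed

lemma normsq_sum: "norm (v::real^'n)^2 = (\<Sum>i\<in>UNIV. v$i * v$i)"
  by (simp add: power2_norm_eq_inner inner_vec_def)

lemma trace_IO_entry:
  fixes v :: "real^'n"
  shows "((\<alpha> *\<^sub>R mat 1 + \<beta> *\<^sub>R outer v) ** (\<gamma> *\<^sub>R mat 1 + \<epsilon> *\<^sub>R outer v)) $ i $ i
     = \<alpha> * \<gamma> + (\<alpha> * \<epsilon> + \<beta> * \<gamma>) * (v$i * v$i) + \<beta> * \<epsilon> * (v$i * v$i) * norm v ^ 2"
proof -
  have "((\<alpha> *\<^sub>R mat 1 + \<beta> *\<^sub>R outer v) ** (\<gamma> *\<^sub>R mat 1 + \<epsilon> *\<^sub>R outer v)) $ i $ i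
      = (\<Sum>k\<in>UNIV. (\<alpha> * (if i = k then 1 else 0) + \<beta> * (v$i * v$k)) * (\<gamma> * (if k = i then 1 else 0) + \<epsilon> * (v$k * v$i)))"
    by (simp add: matrix_matrix_mult_def mat_def outer_def)
  also have "\<dots> = (\<Sum>k\<in>UNIV. (if k = i then \<alpha> * \<gamma> + \<alpha> * \<epsilon> * (v$i * v$i) + \<beta> * \<gamma> * (v$i * v$i) else 0)
        + \<beta> * \<epsilon> * (v$i * v$i) * (v$k * v$k))"
    by (rule sum.cong) (auto simp: algebra_simps)
  also have "\<dots> = \<alpha> * \<gamma> + (\<alpha> * \<epsilon> + \<beta> * \<gamma>) * (v$i * v$i) + \<beta> * \<epsilon> * (v$i * v$i) * norm v ^ 2"
  proof -
    have "(\<Sum>k\<in>UNIV. \<beta> * \<epsilon> * (v$i * v$i) * (v$k * v$k)) = \<beta> * \<epsilon> * (v$i * v$i) * norm v ^ 2"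
      by (simp add: normsq_sum sum_distrib_left)
    then show ?thesis by (simp add: sum.distrib algebra_simps)
  qed
  finally show ?thesis .
qed

lemma trace_IO:
  fixes v :: "real^'n"
  shows "trace ((\<alpha> *\<^sub>R mat 1 + \<beta> *\<^sub>R outer v) ** (\<gamma> *\<^sub>R mat 1 + \<epsilon> *\<^sub>R outer v))
    = \<alpha> * \<gamma> * real CARD('n) + (\<alpha> * \<epsilon> + \<beta> * \<gamma>) * norm v ^ 2 + \<beta> * \<epsilon> * (norm v ^ 2)^2"
  unfolding trace_def trace_IO_entry
  by (simp add: sum.distrib sum_distrib_left[symmetric] sum_distrib_right[symmetric] normsq_sum[symmetric]
        algebra_simps power2_eq_square)

lemma Amat_outer:
  fixes v :: "real^'n"
  assumes "v \<noteq> 0" "a \<noteq> 0"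
  shows "Amat p (a *\<^sub>R v) = (1/p) *\<^sub>R mat 1 + ((1/p) * ((p - 2) / norm v ^ 2)) *\<^sub>R outer v"
proof -
  have n: "norm (a *\<^sub>R v) ^ 2 = a^2 * norm v ^2" by (simp add: power_mult_distrib)
  have "((p - 2) / (norm (a *\<^sub>R v))\<^sup>2) *\<^sub>R (\<chi> i j. (a *\<^sub>R v)$i * (a *\<^sub>R v)$j) = ((p - 2) / norm v ^ 2) *\<^sub>R outer v"
    unfolding n using assms by (simp add: outer_def vec_eq_iff power2_eq_square field_simps)
  then show ?thesis unfolding Amat_def by (simp add: scaleR_add_right)
qed

lemma Gop_radial:
  fixes v :: "real^'n"
  assumes "v \<noteq> 0" "a \<noteq> 0" "p \<noteq> 0"
  shows "Gop p (a *\<^sub>R v) (b *\<^sub>R mat 1 + e *\<^sub>R outer v)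
     = - (1/p) * (b * (real CARD('n) + p - 2) + (p - 1) * e * norm v ^ 2)"
proof -
  have nz: "norm v ^ 2 \<noteq> 0" using assms by simp
  show ?thesis
    unfolding Gop_def Amat_outer[OF assms(1,2)] trace_IO
    using nz assms(3) by (simp add: field_simps power2_eq_square)
qed

lemma Gop_expand:
  "Gop p \<xi> X = - (\<Sum>i\<in>UNIV. \<Sum>k\<in>UNIV. ((1/p) * ((if i = k then 1 else 0) + ((p - 2) / (norm \<xi>)\<^sup>2) * (\<xi>$i * \<xi>$k))) * X$k$i)"
  by (simp add: Gop_def Amat_def trace_def matrix_matrix_mult_def mat_def)

lemma Gstar_le:
  fixes \<xi> :: "real^'n"
  assumes "\<xi> \<noteq> 0"
  shows "Gstar p \<xi> X \<le> ereal (Gop p \<xi> X)"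
proof -
  let ?F = "at (\<xi>, X) within {z::(real^'n) \<times> (real^'n^'n). fst z \<noteq> 0}"
  have nz: "(norm \<xi>)\<^sup>2 \<noteq> 0" using assms by simp
  have f1: "(fst \<longlongrightarrow> \<xi>) ?F" using tendsto_fst[OF tendsto_ident_at[of "(\<xi>,X)"]] by simp
  have f2: "(snd \<longlongrightarrow> X) ?F" using tendsto_snd[OF tendsto_ident_at[of "(\<xi>,X)"]] by simp
  have "((\<lambda>z. Gop p (fst z) (snd z)) \<longlongrightarrow> Gop p \<xi> X) ?F"
    unfolding Gop_expand
    by (intro tendsto_intros tendsto_vec_nth f1 f2 nz)
  then have T: "((\<lambda>z. ereal (Gop p (fst z) (snd z))) \<longlongrightarrow> ereal (Gop p \<xi> X)) ?F"
    by (rule tendsto_ereal)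
  show ?thesis
  proof (cases "trivial_limit ?F")
    case True
    then show ?thesis using True unfolding Gstar_def by simp
  next
    case False
    then show ?thesis unfolding Gstar_def using lim_imp_Limsup[OF False T] by simp
  qed
qed

lemma lsc_open:
  assumes "lsc f"
  shows "open {y. t < f y}"
proof (rule open_subopen[THEN iffD2], rule ballI)
  fix x assume x: "x \<in> {y. t < f y}"
  then have "eventually (\<lambda>y. t < f y) (at x)" using assms unfolding lsc_def by auto
  then obtain T where T: "open T" "x \<in> T" "\<forall>y\<in>T. y \<noteq> x \<longrightarrow> t < f y"
    unfolding eventually_at_topological by auto
  have "T \<subseteq> {y. t < f y}"
  proof
    fix y assume "y \<in> T" then show "y \<in> {y. t < f y}" using T(3) x by (cases "y = x") auto
  qed
  then show "\<exists>T. open T \<and> x \<in> T \<and> T \<subseteq> {y. t < f y}" using T(1,2) by blast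
qed

lemma lsc_diff:
  fixes u phi :: "'a::topological_space \<Rightarrow> real"
  assumes "lsc u" "continuous_on UNIV phi"
  shows "lsc (\<lambda>y. u y - phi y)"
  unfolding lsc_def
proof (intro allI impI)
  fix x t assume tx: "t < u x - phi x"
  define e where "e = (u x - phi x - t) / 2"
  have e: "e > 0" using tx by (simp add: e_def)
  have te: "t = u x - phi x - 2*e" by (simp add: e_def field_simps)
  have "u x - e < u x" using e by simp
  then have "\<forall>\<^sub>F y in at x. u x - e < u y" using assms(1) unfolding lsc_def by blast
  moreover have "\<forall>\<^sub>F y in at x. phi y < phi x + e"
  proof -
    have "(phi \<longlongrightarrow> phi x) (at x)"
      using assms(2) by (simp add: continuous_on_def)
    moreover have "phi x < phi x + e" using e by simp
    ultimately show ?thesis by (rule order_tendstoD)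
  qed
  ultimately show "\<forall>\<^sub>F y in at x. t < u y - phi y"
    by eventually_elim (use te in linarith)
qed

lemma lsc_min:
  fixes f :: "'a::topological_space \<Rightarrow> real"
  assumes "lsc f" "compact K" "K \<noteq> {}"
  shows "\<exists>x\<in>K. \<forall>y\<in>K. f x \<le> f y"
proof (rule ccontr)
  assume "\<not> ?thesis"
  then have H: "\<forall>x\<in>K. \<exists>y\<in>K. f y < f x" by (auto simp: not_le)
  have cov: "K \<subseteq> (\<Union>x\<in>K. {y. f x < f y})" using H by blast
  obtain C where C: "C \<subseteq> K" "finite C" "K \<subseteq> (\<Union>x\<in>C. {y. f x < f y})"
    by (rule compactE_image[OF assms(2) lsc_open[OF assms(1)] cov]) blast
  have "C \<noteq> {}" using C(3) assms(3) by auto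
  then have "Min (f ` C) \<in> f ` C" using C(2) by (intro Min_in) auto
  then obtain x0 where x0c: "x0 \<in> C" "f x0 = Min (f ` C)" by auto
  have x0: "\<forall>x\<in>C. f x0 \<le> f x" using x0c C(2) by auto
  have "x0 \<in> K" using C(1) x0c by auto
  then obtain x where "x \<in> C" "f x < f x0" using C(3) by auto
  then show False using x0 by force
qed


definition zeta :: "real \<Rightarrow> real \<Rightarrow> real \<Rightarrow> real \<Rightarrow> real \<Rightarrow> real" where
  "zeta a0 d k S s = exp (a0 - (d/2) * ln s - (1/k) * ln (ln S - ln s))"

definition zeta' :: "real \<Rightarrow> real \<Rightarrow> real \<Rightarrow> real \<Rightarrow> real \<Rightarrow> real" where
  "zeta' a0 d k S s = zeta a0 d k S s / s * (1 / (k * (ln S - ln s)) - d/2)"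

lemma zeta_pos: "zeta a0 d k S s > 0" by (simp add: zeta_def)

lemma zeta_deriv:
  assumes "0 < s" "s < S" "k \<noteq> 0"
  shows "(zeta a0 d k S has_real_derivative zeta' a0 d k S s) (at s)"
proof -
  have l: "ln S - ln s > 0" using assms by simp
  have d1: "(ln has_real_derivative 1/s) (at s)" using assms by (intro DERIV_ln_divide) auto
  have d2: "((\<lambda>x. ln S - ln x) has_real_derivative (0 - 1/s)) (at s)"
    by (intro DERIV_diff DERIV_const d1)
  have d3: "((\<lambda>x. ln (ln S - ln x)) has_real_derivative (1 / (ln S - ln s)) * (0 - 1/s)) (at s)"
    by (rule DERIV_chain2[OF DERIV_ln_divide[OF l] d2])
  have d4: "((\<lambda>x. a0 - (d/2) * ln x - (1/k) * ln (ln S - ln x)) has_real_derivative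
      (0 - (d/2) * (1/s) - (1/k) * ((1 / (ln S - ln s)) * (0 - 1/s)))) (at s)"
    by (intro DERIV_diff DERIV_const DERIV_cmult d1 d3)
  have d5: "(zeta a0 d k S has_real_derivative zeta a0 d k S s * (0 - (d/2) * (1/s) - (1/k) * ((1 / (ln S - ln s)) * (0 - 1/s)))) (at s)"
    unfolding zeta_def by (rule DERIV_fun_exp[OF d4])
  have e: "zeta a0 d k S s * (0 - (d/2) * (1/s) - (1/k) * ((1 / (ln S - ln s)) * (0 - 1/s))) = zeta' a0 d k S s"
    unfolding zeta'_def using assms l by (simp add: field_simps)
  show ?thesis using d5 e by simp
qed

lemma zeta_cont: "0 < a \<Longrightarrow> b < S \<Longrightarrow> continuous_on {a..b} (zeta a0 d k S)"
  unfolding zeta_def by (intro continuous_intros) (auto simp: less_diff_eq)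

lemma zeta'_cont: "k \<noteq> 0 \<Longrightarrow> 0 < a \<Longrightarrow> b < S \<Longrightarrow> continuous_on {a..b} (zeta' a0 d k S)"
  unfolding zeta'_def zeta_def by (intro continuous_intros) (auto simp: less_diff_eq)

lemma KI:
  assumes p1: "p > 1" and k: "k > 0" and s0: "0 < s0" "s0 \<le> s" and sS: "s < S"
    and dN: "N + p - 2 = (p - 1) * d" and m: "k * (d - 1) \<le> 1"
    and a0: "a0 = (ln (4*(p-1)/(p*k)) - ((1 - k*(d-1))/2) * ln s0 + 1) / k"
  shows "(1/p) * (2 * zeta a0 d k S s * (N + p - 2) + 4 * (p-1) * s * zeta' a0 d k S s)
     < (2 * zeta a0 d k S s * sqrt s) powr (1 + k)"
proof -
  define z where "z = zeta a0 d k S s"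
  define l where "l = ln S - ln s"
  define C where "C = 4*(p-1)/(p*k)"
  have spos: "s > 0" using s0 by simp
  have lpos: "l > 0" using spos sS by (simp add: l_def)
  have zpos: "z > 0" by (simp add: z_def zeta_def)
  have Cpos: "C > 0" using p1 k by (simp add: C_def)
  have lnz: "ln z = a0 - (d/2) * ln s - (1/k) * ln l" by (simp add: z_def zeta_def l_def)
  have L: "(1/p) * (2 * z * (N + p - 2) + 4 * (p-1) * s * zeta' a0 d k S s) = C * z / l"
    unfolding zeta'_def z_def[symmetric] l_def[symmetric] C_def dN
    using p1 k spos lpos by (simp add: field_simps)
  have L2: "C * z / l = exp (ln C + ln z - ln l)"
    using Cpos zpos lpos by (simp add: exp_diff exp_add)
  have R: "(2 * z * sqrt s) powr (1 + k) = exp ((1 + k) * (ln 2 + ln z + ln s / 2))"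
    using zpos spos by (simp add: powr_def ln_mult ln_sqrt)
  have kz: "k * ln z = k * a0 - (k * d / 2) * ln s - ln l"
    unfolding lnz using k by (simp add: field_simps)
  have ka: "k * a0 = ln C - ((1 - k*(d-1))/2) * ln s0 + 1"
    unfolding a0 C_def using k by (simp add: field_simps)
  have mono: "(1 - k*(d-1)) * (ln s - ln s0) \<ge> 0"
    using m s0 by (intro mult_nonneg_nonneg) auto
  have ln2: "ln (2::real) > 0" by simp
  have "ln C + ln z - ln l < (1 + k) * (ln 2 + ln z + ln s / 2)"
  proof -
    have "(1 + k) * (ln 2 + ln z + ln s / 2) - (ln C + ln z - ln l)
        = (1 + k) * ln 2 + 1 + (1 - k*(d-1)) * (ln s - ln s0) / 2"
      using kz ka by (simp add: field_simps)
    moreover have "(1 + k) * ln 2 > 0" using k ln2 by simp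
    ultimately show ?thesis using mono by linarith
  qed
  then show ?thesis unfolding z_def[symmetric] L L2 R by simp
qed


lemma zeta_upper:
  assumes "0 < s0" "s0 \<le> s" "s \<le> s1" "s1 < S" "k > 0" "d \<ge> 0"
  shows "zeta a0 d k S s \<le> exp (a0 - (d/2) * ln s0 - (1/k) * ln (ln S - ln s1))"
proof -
  have "ln s0 \<le> ln s" using assms by simp
  then have A: "(d/2) * ln s0 \<le> (d/2) * ln s" using assms(6) by (intro mult_left_mono) auto
  have pos: "ln S - ln s1 > 0" using assms by simp
  have "ln S - ln s1 \<le> ln S - ln s" using assms by simp
  then have "ln (ln S - ln s1) \<le> ln (ln S - ln s)" using pos by simp
  then have B: "(1/k) * ln (ln S - ln s1) \<le> (1/k) * ln (ln S - ln s)" using assms(5) by (intro mult_left_mono) auto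
  show ?thesis unfolding zeta_def using A B by simp
qed

lemma zeta_lower:
  assumes "0 < s1" "s1 \<le> s" "s < S" "k > 0" "d \<ge> 0"
  shows "exp (a0 - (d/2) * ln S + (1/k) * ln s1 - (1/k) * ln (S - s)) \<le> zeta a0 d k S s"
proof -
  have "ln s \<le> ln S" using assms by simp
  then have A: "(d/2) * ln s \<le> (d/2) * ln S" using assms(5) by (intro mult_left_mono) auto
  have pos: "ln S - ln s > 0" using assms by simp
  have "ln S - ln s = ln (S / s)" using assms by (simp add: ln_div)
  also have "\<dots> \<le> S / s - 1" using assms by (intro ln_le_minus_one) auto
  also have "\<dots> = (S - s) / s" using assms by (simp add: field_simps)
  also have "\<dots> \<le> (S - s) / s1" using assms by (intro divide_left_mono) auto
  finally have "ln S - ln s \<le> (S - s) / s1" .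
  then have "ln (ln S - ln s) \<le> ln ((S - s) / s1)" using pos by simp
  also have "\<dots> = ln (S - s) - ln s1" using assms by (simp add: ln_div)
  finally have "(1/k) * ln (ln S - ln s) \<le> (1/k) * (ln (S - s) - ln s1)" using assms(4) by (intro mult_left_mono) auto
  then show ?thesis unfolding zeta_def using A by (simp add: algebra_simps)
qed

lemma zeta_int_upper:
  assumes "0 < s0" "s0 \<le> s1" "s1 < S" "k > 0" "d \<ge> 0"
  shows "integral {s0..s1} (zeta a0 d k S) \<le> (s1 - s0) * exp (a0 - (d/2) * ln s0 - (1/k) * ln (ln S - ln s1))"
proof -
  have "integral {s0..s1} (zeta a0 d k S) \<le> integral {s0..s1} (\<lambda>_. exp (a0 - (d/2) * ln s0 - (1/k) * ln (ln S - ln s1)))"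
    using assms by (intro integral_le integrable_continuous_real zeta_cont zeta_upper) auto
  also have "\<dots> = (s1 - s0) * exp (a0 - (d/2) * ln s0 - (1/k) * ln (ln S - ln s1))"
    using assms by simp
  finally show ?thesis .
qed

lemma zeta_int_lower:
  fixes a0 d k S s1 s2 :: real
  assumes "0 < s1" "s1 \<le> s2" "s2 < S" "k > 0" "k < 1" "d \<ge> 0"
  defines "B \<equiv> exp (a0 - (d/2) * ln S + (1/k) * ln s1)"
  defines "\<beta> \<equiv> 1/k - 1"
  shows "(B/\<beta>) * exp (- \<beta> * ln (S - s2)) - (B/\<beta>) * exp (- \<beta> * ln (S - s1)) \<le> integral {s1..s2} (zeta a0 d k S)"
proof -
  have bpos: "\<beta> > 0" using assms by (simp add: \<beta>_def)
  have bk: "\<beta> + 1 = 1/k" by (simp add: \<beta>_def)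
  define F where "F = (\<lambda>s. (B/\<beta>) * exp (- \<beta> * ln (S - s)))"
  define f where "f = (\<lambda>s. exp (a0 - (d/2) * ln S + (1/k) * ln s1 - (1/k) * ln (S - s)))"
  have dF: "(F has_real_derivative f s) (at s within {s1..s2})" if s: "s \<in> {s1..s2}" for s
  proof -
    have Ss: "S - s > 0" using s assms by auto
    have d0: "((\<lambda>x. S - x) has_real_derivative (0 - 1)) (at s)" by (intro derivative_intros)
    have d1: "((\<lambda>x. ln (S - x)) has_real_derivative (1 / (S - s)) * (0 - 1)) (at s)"
      using DERIV_chain2[OF _ d0, of ln "1/(S-s)"] DERIV_ln_divide[OF Ss] by simp
    have d2: "((\<lambda>x. - \<beta> * ln (S - x)) has_real_derivative - \<beta> * ((1 / (S - s)) * (0 - 1))) (at s)"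
      using DERIV_cmult[OF d1, of "- \<beta>"] by simp
    have d3: "(F has_real_derivative (B/\<beta>) * (exp (- \<beta> * ln (S - s)) * (- \<beta> * ((1 / (S - s)) * (0 - 1))))) (at s)"
      unfolding F_def by (intro DERIV_cmult DERIV_fun_exp d2)
    have "(B/\<beta>) * (exp (- \<beta> * ln (S - s)) * (- \<beta> * ((1 / (S - s)) * (0 - 1)))) = B * exp (- \<beta> * ln (S - s)) / (S - s)"
      using bpos Ss by (simp add: field_simps)
    also have "\<dots> = B * exp (- \<beta> * ln (S - s) - ln (S - s))"
      using Ss by (simp add: exp_diff)
    also have "\<dots> = f s"
    proof -
      have e: "- (1/k) * ln (S - s) = - \<beta> * ln (S - s) - ln (S - s)"
        unfolding bk[symmetric] by (simp add: algebra_simps)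
      show ?thesis unfolding f_def B_def diff_conv_add_uminus[of _ "(1/k) * ln (S - s)"] minus_mult_left e
        by (simp add: exp_add[symmetric] algebra_simps)
    qed
    finally show ?thesis using d3 by (simp add: has_field_derivative_at_within)
  qed
  have "(f has_integral (F s2 - F s1)) {s1..s2}"
    using assms(2) dF by (intro fundamental_theorem_of_calculus) (auto simp: has_real_derivative_iff_has_vector_derivative[symmetric])
  then have "integral {s1..s2} f = F s2 - F s1" by (rule integral_unique)
  moreover have "integral {s1..s2} f \<le> integral {s1..s2} (zeta a0 d k S)"
  proof (rule integral_le)
    show "f integrable_on {s1..s2}" unfolding f_def using assms by (intro integrable_continuous_real continuous_intros) auto
    show "zeta a0 d k S integrable_on {s1..s2}" using assms by (intro integrable_continuous_real zeta_cont) auto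
    show "\<And>x. x \<in> {s1..s2} \<Longrightarrow> f x \<le> zeta a0 d k S x"
      unfolding f_def using assms by (intro zeta_lower) auto
  qed
  ultimately show ?thesis unfolding F_def by simp
qed


lemma construct:
  fixes a0 d k s0 s1 \<delta> :: real
  assumes s0: "0 < s0" "s0 < s1" and k: "0 < k" "k < 1" and d: "d \<ge> 0" and dl: "\<delta> > 0"
  shows "\<exists>S s2. s1 < s2 \<and> s2 < S \<and> integral {s0..s1} (zeta a0 d k S) \<le> \<delta>/2
     \<and> \<delta> \<le> integral {s0..s2} (zeta a0 d k S)"
proof -
  define c where "c = 2*(s1 - s0 + 1)/\<delta>"
  have cpos: "c > 0" using s0 dl by (simp add: c_def)
  define L1 where "L1 = exp (k * (a0 - (d/2)*ln s0 + ln c))"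
  define S where "S = s1 * exp L1"
  have L1pos: "L1 > 0" by (simp add: L1_def)
  have "exp L1 > 1" using L1pos by simp
  then have s1S: "s1 < S" using s0 by (simp add: S_def)
  have lnS: "ln S - ln s1 = L1" using s0 by (simp add: S_def ln_mult)
  have "(1/k) * ln L1 = a0 - (d/2)*ln s0 + ln c" using k by (simp add: L1_def)
  then have "exp (a0 - (d/2) * ln s0 - (1/k) * ln (ln S - ln s1)) = exp (- ln c)"
    unfolding lnS by simp
  also have "\<dots> = \<delta> / (2*(s1 - s0 + 1))" using cpos by (simp add: exp_minus c_def)
  finally have Bu: "exp (a0 - (d/2) * ln s0 - (1/k) * ln (ln S - ln s1)) = \<delta> / (2*(s1 - s0 + 1))" .
  have I1: "integral {s0..s1} (zeta a0 d k S) \<le> \<delta>/2"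
  proof -
    have "integral {s0..s1} (zeta a0 d k S) \<le> (s1 - s0) * (\<delta> / (2*(s1 - s0 + 1)))"
      using zeta_int_upper[of s0 s1 S k d a0] s0 s1S k d Bu by simp
    also have "\<dots> \<le> \<delta>/2" using s0 dl by (simp add: field_simps)
    finally show ?thesis .
  qed
  define B where "B = exp (a0 - (d/2) * ln S + (1/k) * ln s1)"
  define \<beta> where "\<beta> = 1/k - 1"
  have Bpos: "B > 0" by (simp add: B_def)
  have bpos: "\<beta> > 0" using k by (simp add: \<beta>_def)
  define Y where "Y = exp (- \<beta> * ln (S - s1)) + \<beta> * \<delta> / B"
  have Ygt: "Y > exp (- \<beta> * ln (S - s1))" using bpos dl Bpos by (simp add: Y_def)
  have Ypos: "Y > 0" using Ygt by (meson exp_gt_zero less_trans)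
  define s2 where "s2 = S - exp (- ln Y / \<beta>)"
  have s2S: "s2 < S" by (simp add: s2_def)
  have "ln Y > - \<beta> * ln (S - s1)" using Ygt Ypos by (metis exp_less_cancel_iff exp_ln)
  then have "- ln Y / \<beta> < ln (S - s1)" using bpos by (simp add: field_simps)
  then have "exp (- ln Y / \<beta>) < S - s1" using s1S by (metis exp_less_cancel_iff exp_ln diff_gt_0_iff_gt)
  then have s12: "s1 < s2" by (simp add: s2_def)
  have "exp (- \<beta> * ln (S - s2)) = Y"
    using bpos Ypos by (simp add: s2_def)
  then have F: "(B/\<beta>) * exp (- \<beta> * ln (S - s2)) - (B/\<beta>) * exp (- \<beta> * ln (S - s1)) = \<delta>"
    using bpos Bpos by (simp add: Y_def field_simps)
  have I2: "\<delta> \<le> integral {s1..s2} (zeta a0 d k S)"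
    using zeta_int_lower[of s1 s2 S k d a0] s0 s12 s2S k d F
    unfolding B_def \<beta>_def by simp
  have I0: "0 \<le> integral {s0..s1} (zeta a0 d k S)"
    using s0 s1S by (intro integral_nonneg integrable_continuous_real zeta_cont) (auto intro: less_imp_le[OF zeta_pos])
  have "integral {s0..s1} (zeta a0 d k S) + integral {s1..s2} (zeta a0 d k S) = integral {s0..s2} (zeta a0 d k S)"
  proof -
    have "zeta a0 d k S integrable_on {s0..s2}"
      using s0 s2S by (intro integrable_continuous_real zeta_cont) auto
    then show ?thesis using Henstock_Kurzweil_Integration.integral_combine[where a=s0 and c=s1 and b=s2 and f="zeta a0 d k S"] s0 s12 by simp
  qed
  then have "\<delta> \<le> integral {s0..s2} (zeta a0 d k S)" using I0 I2 by linarith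
  then show ?thesis using I1 s12 s2S by blast
qed


lemma glue_cont:
  fixes f g h :: "real \<Rightarrow> real"
  assumes ab: "a < b" and cf: "continuous_on UNIV f" and ch: "continuous_on UNIV h"
    and cg: "continuous_on {a..b} g" and e1: "f a = g a" and e2: "h b = g b"
  shows "continuous_on UNIV (glue a b f g h)"
proof -
  have U: "(UNIV::real set) = {..a} \<union> ({a..b} \<union> {b..})" using ab by auto
  have c1: "continuous_on {..a} (glue a b f g h)"
    by (rule continuous_on_eq[OF continuous_on_subset[OF cf]]) (use e1 ab in \<open>auto simp: glue_def\<close>)
  have c2: "continuous_on {a..b} (glue a b f g h)"
    by (rule continuous_on_eq[OF cg]) (auto simp: glue_def)
  have c3: "continuous_on {b..} (glue a b f g h)"
    by (rule continuous_on_eq[OF continuous_on_subset[OF ch]]) (use e2 ab in \<open>auto simp: glue_def\<close>)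
  show ?thesis unfolding U
    by (intro continuous_on_closed_Un c1 c2 c3 closed_atMost closed_atLeast closed_atLeastAtMost closed_Un)
qed

definition ext0 :: "real \<Rightarrow> real \<Rightarrow> (real \<Rightarrow> real) \<Rightarrow> (real \<Rightarrow> real) \<Rightarrow> (real \<Rightarrow> real) \<Rightarrow> real \<Rightarrow> real" where
  "ext0 a b g g1 g2 = glue a b (\<lambda>x. g a + g1 a * (x - a) + g2 a * (x - a)^2 / 2) g
      (\<lambda>x. g b + g1 b * (x - b) + g2 b * (x - b)^2 / 2)"

definition ext1 :: "real \<Rightarrow> real \<Rightarrow> (real \<Rightarrow> real) \<Rightarrow> (real \<Rightarrow> real) \<Rightarrow> real \<Rightarrow> real" where
  "ext1 a b g1 g2 = glue a b (\<lambda>x. g1 a + g2 a * (x - a)) g1 (\<lambda>x. g1 b + g2 b * (x - b))"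

definition ext2 :: "real \<Rightarrow> real \<Rightarrow> (real \<Rightarrow> real) \<Rightarrow> real \<Rightarrow> real" where
  "ext2 a b g2 = glue a b (\<lambda>x. g2 a) g2 (\<lambda>x. g2 b)"

lemma taylor2_deriv:
  "((\<lambda>x. c0 + c1 * (x - a) + c2 * (x - a)^2 / 2) has_real_derivative (c1 + c2 * (x - a))) (at x)"
  by (auto intro!: derivative_eq_intros simp: field_simps)

lemma taylor1_deriv:
  "((\<lambda>x. c1 + c2 * (x - a)) has_real_derivative c2) (at x)"
  by (auto intro!: derivative_eq_intros)

lemma ext_C2:
  fixes g g1 g2 :: "real \<Rightarrow> real"
  assumes ab: "a < b"
    and d1: "\<And>x. x \<in> {a..b} \<Longrightarrow> (g has_real_derivative g1 x) (at x within {a..b})"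
    and d2: "\<And>x. x \<in> {a..b} \<Longrightarrow> (g1 has_real_derivative g2 x) (at x within {a..b})"
    and c2: "continuous_on {a..b} g2"
  shows "(ext0 a b g g1 g2 has_real_derivative ext1 a b g1 g2 x) (at x)"
    "(ext1 a b g1 g2 has_real_derivative ext2 a b g2 x) (at x)"
    "continuous_on UNIV (ext2 a b g2)"
proof -
  show "(ext0 a b g g1 g2 has_real_derivative ext1 a b g1 g2 x) (at x)"
    unfolding ext0_def ext1_def
    by (rule deriv_glue[OF ab taylor2_deriv taylor2_deriv d1]) auto
  show "(ext1 a b g1 g2 has_real_derivative ext2 a b g2 x) (at x)"
    unfolding ext1_def ext2_def
    by (rule deriv_glue[OF ab taylor1_deriv taylor1_deriv d2]) auto
  show "continuous_on UNIV (ext2 a b g2)"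
    unfolding ext2_def by (rule glue_cont[OF ab _ _ c2]) auto
qed

lemma ext_mid:
  assumes "x \<in> {a..b}"
  shows "ext0 a b g g1 g2 x = g x" "ext1 a b g1 g2 x = g1 x" "ext2 a b g2 x = g2 x"
  using assms by (auto simp: ext0_def ext1_def ext2_def glue_def)


lemma C2_cont:
  assumes "C2_with phi Dphi D2phi"
  shows "continuous_on UNIV phi"
proof -
  have "\<forall>x. isCont phi x"
    using assms unfolding C2_with_def by (blast intro: has_derivative_continuous)
  then show ?thesis by (simp add: continuous_at_imp_continuous_on)
qed

lemma comparison:
  fixes u phi :: "real^'n \<Rightarrow> real"
  assumes vs: "visc_super p H u" and C2: "C2_with phi Dphi D2phi"
    and K: "compact K" "K \<noteq> {}" and U: "open U" "U \<subseteq> K"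
    and bd: "\<And>y. y \<in> K \<Longrightarrow> y \<notin> U \<Longrightarrow> phi y \<le> u y"
    and strict: "\<And>y. y \<in> U \<Longrightarrow> Gstar p (Dphi y) (D2phi y) < ereal (H (u y) (Dphi y))"
  shows "\<forall>y\<in>K. phi y \<le> u y"
proof -
  have lu: "lsc u" using vs unfolding visc_super_def by blast
  have lf: "lsc (\<lambda>y. u y - phi y)" by (rule lsc_diff[OF lu C2_cont[OF C2]])
  obtain y1 where y1: "y1 \<in> K" "\<forall>y\<in>K. u y1 - phi y1 \<le> u y - phi y"
    using lsc_min[OF lf K] by blast
  show ?thesis
  proof (cases "u y1 - phi y1 \<ge> 0")
    case True
    then show ?thesis using y1 by force
  next
    case False
    then have "y1 \<in> U" using bd y1(1) by force
    then obtain e where e: "e > 0" "ball y1 e \<subseteq> U" using U(1) open_contains_ball by blast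
    have "\<forall>y\<in>ball y1 e. u y - phi y \<ge> u y1 - phi y1" using e(2) U(2) y1(2) by blast
    then have "\<exists>e>0. \<forall>y\<in>ball y1 e. u y - phi y \<ge> u y1 - phi y1" using e(1) by blast
    then have "Gstar p (Dphi y1) (D2phi y1) \<ge> ereal (H (u y1) (Dphi y1))"
      using vs C2 unfolding visc_super_def by blast
    then show ?thesis using strict[OF \<open>y1 \<in> U\<close>] by simp
  qed
qed

lemma params:
  fixes N p q \<gamma> :: real
  assumes N2: "N \<ge> 2" and p1: "p > 1" and p2: "p \<noteq> 2"
    and D1: "p > 2 \<Longrightarrow> (p - 1) * (N - 1) > 1"
    and H: "(p > 2 \<and> 1 < \<gamma> \<and>
           \<gamma> \<le> ((p - 1) * (N - 1) + 1) / ((p - 1) * (N - 1)) \<and>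
           q > ((p - 1) * (N - 1) + 1) / ((p - 1) * (N - 1) - 1))
       \<or> (p < 2 \<and> 1 < \<gamma> \<and>
           \<gamma> \<le> (N + p - 2) / (N - 1) \<and>
           q > (N + p - 2) / (N - p))"
  shows "0 < \<gamma> - 1" "\<gamma> - 1 < 1" "(\<gamma> - 1) * ((N + p - 2) / (p - 1) - 1) \<le> 1"
proof -
  have dm: "(N + p - 2) / (p - 1) - 1 = (N - 1) / (p - 1)" using p1 by (simp add: field_simps)
  from H show "0 < \<gamma> - 1" by auto
  from H consider (a) "p > 2" "1 < \<gamma>" "\<gamma> \<le> ((p - 1) * (N - 1) + 1) / ((p - 1) * (N - 1))"
    | (b) "p < 2" "1 < \<gamma>" "\<gamma> \<le> (N + p - 2) / (N - 1)" by blast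
  then have "\<gamma> - 1 < 1 \<and> (\<gamma> - 1) * ((N + p - 2) / (p - 1) - 1) \<le> 1"
  proof cases
    case a
    define D where "D = (p - 1) * (N - 1)"
    have D: "D > 1" using D1 a(1) by (simp add: D_def)
    have "\<gamma> \<le> 1 + 1 / D" using a(3) D by (simp add: D_def field_simps)
    then have k: "\<gamma> - 1 \<le> 1 / D" by simp
    have "1 / D < 1" using D by simp
    moreover have "(\<gamma> - 1) * ((N - 1) / (p - 1)) \<le> 1"
    proof -
      have "(\<gamma> - 1) * ((N - 1) / (p - 1)) \<le> (1 / D) * ((N - 1) / (p - 1))"
        using k N2 p1 by (intro mult_right_mono) auto
      also have "\<dots> = 1 / (p - 1)^2"
      proof -
        have "N - 1 \<noteq> 0" "p - 1 \<noteq> 0" using N2 p1 by auto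
        then show ?thesis by (simp add: D_def power2_eq_square)
      qed
      also have "\<dots> \<le> 1"
      proof -
        have h: "1 \<le> p - 1" using a(1) by simp
        have "1 * 1 \<le> (p - 1) * (p - 1)" by (rule mult_mono) (use h in auto)
        then show ?thesis by (simp add: power2_eq_square)
      qed
      finally show ?thesis .
    qed
    ultimately show ?thesis using k dm by simp
  next
    case b
    have "\<gamma> - 1 \<le> (p - 1) / (N - 1)" using b(3) N2 by (simp add: field_simps)
    moreover have "(p - 1) / (N - 1) < 1" using b(1) N2 by (simp add: field_simps)
    moreover have "(\<gamma> - 1) * ((N - 1) / (p - 1)) \<le> ((p - 1) / (N - 1)) * ((N - 1) / (p - 1))"
      using \<open>\<gamma> - 1 \<le> (p - 1) / (N - 1)\<close> N2 p1 by (intro mult_right_mono) auto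
    moreover have "((p - 1) / (N - 1)) * ((N - 1) / (p - 1)) = 1" using N2 p1 by simp
    ultimately show ?thesis using dm by simp
  qed
  then show "\<gamma> - 1 < 1" "(\<gamma> - 1) * ((N + p - 2) / (p - 1) - 1) \<le> 1" by auto
qed


theorem mainTheorem10:
  fixes u :: "real^'n \<Rightarrow> real" and p q \<gamma> :: real
  assumes "CARD('n) \<ge> 2"
    and "p > 1" and "p \<noteq> 2"
    and "p > 2 \<Longrightarrow> (p - 1) * (real CARD('n) - 1) > 1"
    and "\<forall>x. u x \<ge> 0"
    and "visc_super p (\<lambda>r \<xi>. r powr q + norm \<xi> powr \<gamma>) u"
    and "(p > 2 \<and> 1 < \<gamma> \<and>
           \<gamma> \<le> ((p - 1) * (real CARD('n) - 1) + 1) / ((p - 1) * (real CARD('n) - 1)) \<and>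
           q > ((p - 1) * (real CARD('n) - 1) + 1) / ((p - 1) * (real CARD('n) - 1) - 1))
       \<or> (p < 2 \<and> 1 < \<gamma> \<and>
           \<gamma> \<le> (real CARD('n) + p - 2) / (real CARD('n) - 1) \<and>
           q > (real CARD('n) + p - 2) / (real CARD('n) - p))"
  shows "\<exists>c. \<forall>x. u x = c"
proof (rule ccontr)
  assume nc: "\<not> (\<exists>c. \<forall>x. u x = c)"
  define N where "N = real CARD('n)"
  define k where "k = \<gamma> - 1"
  define d where "d = (N + p - 2) / (p - 1)"
  have N2: "N \<ge> 2" using assms(1) by (simp add: N_def)
  have p1: "p > 1" using assms(2) .
  have kp: "0 < k" "k < 1" "k * (d - 1) \<le> 1"
    using params[OF N2 p1 assms(3) assms(4)[folded N_def] assms(7)[folded N_def]]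
    unfolding k_def d_def by auto
  have dpos: "d \<ge> 0" using N2 p1 by (simp add: d_def)
  have dN: "N + p - 2 = (p - 1) * d" using p1 by (simp add: d_def)
  have gk: "\<gamma> = 1 + k" by (simp add: k_def)
  define M where "M = Inf (range u)"
  have bdd: "bdd_below (range u)" using assms(5) by (auto intro: bdd_belowI2)
  have Mle: "\<And>x. M \<le> u x" unfolding M_def using bdd by (simp add: cInf_lower)
  obtain x0 where x0: "u x0 \<noteq> M" using nc by blast
  then have x0M: "M < u x0" using Mle[of x0] by simp
  define \<delta> where "\<delta> = (u x0 - M) / 2"
  have dl: "\<delta> > 0" using x0M by (simp add: \<delta>_def)
  have lu: "lsc u" using assms(6) unfolding visc_super_def by blast
  have "M + \<delta> < u x0" unfolding \<delta>_def using x0M by (simp add: field_simps)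
  then have "\<forall>\<^sub>F y in at x0. M + \<delta> < u y" using lu unfolding lsc_def by blast
  then obtain e where e: "e > 0" "\<forall>y. y \<noteq> x0 \<and> dist y x0 < e \<longrightarrow> M + \<delta> < u y"
    unfolding eventually_at by auto
  define s0 where "s0 = (e/2)^2"
  have s0pos: "s0 > 0" using e by (simp add: s0_def)
  have inner: "M + \<delta> \<le> u y" if "norm (y - x0)^2 \<le> s0" for y
  proof (cases "y = x0")
    case True then show ?thesis using \<open>M + \<delta> < u x0\<close> by simp
  next
    case False
    have "norm (y - x0) \<le> e/2" using that e(1) unfolding s0_def
      by (simp add: power_mono_iff[symmetric])
    then have "dist y x0 < e" using e(1) by (simp add: dist_norm)
    then show ?thesis using e(2) False by force
  qed
  obtain x1 where x1: "u x1 < M + \<delta>/2"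
  proof -
    have "Inf (range u) < M + \<delta>/2" using dl by (simp add: M_def)
    then show ?thesis using that cInf_less_iff[of "range u"] bdd by auto
  qed
  have "M + \<delta>/2 \<le> u x1"
  proof (cases "norm (x1 - x0)^2 \<le> s0")
    case True then show ?thesis using inner[of x1] dl by simp
  next
    case False
    define s1 where "s1 = norm (x1 - x0)^2"
    have s01: "s0 < s1" using False by (simp add: s1_def)
    define a0 where "a0 = (ln (4*(p-1)/(p*k)) - ((1 - k*(d-1))/2) * ln s0 + 1) / k"
    obtain S s2 where S: "s1 < s2" "s2 < S" "integral {s0..s1} (zeta a0 d k S) \<le> \<delta>/2"
      "\<delta> \<le> integral {s0..s2} (zeta a0 d k S)"
      using construct[OF s0pos s01 kp(1,2) dpos dl, of a0] by blast
    define g where "g = (\<lambda>s. M + \<delta> - integral {s0..s} (zeta a0 d k S))"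
    define g1 where "g1 = (\<lambda>s. - zeta a0 d k S s)"
    define g2 where "g2 = (\<lambda>s. - zeta' a0 d k S s)"
    have s02: "s0 < s2" using s01 S(1) by simp
    have czeta: "continuous_on {s0..s2} (zeta a0 d k S)"
      using s0pos S(2) by (intro zeta_cont) auto
    have d1: "(g has_real_derivative g1 x) (at x within {s0..s2})" if "x \<in> {s0..s2}" for x
    proof -
      have "((\<lambda>x. integral {s0..x} (zeta a0 d k S)) has_real_derivative zeta a0 d k S x) (at x within {s0..s2})"
        by (rule integral_has_real_derivative[OF czeta that])
      then have "((\<lambda>x. M + \<delta> - integral {s0..x} (zeta a0 d k S)) has_real_derivative 0 - zeta a0 d k S x) (at x within {s0..s2})"
        by (intro DERIV_diff DERIV_const)
      then show ?thesis by (simp add: g_def g1_def)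
    qed
    have d2: "(g1 has_real_derivative g2 x) (at x within {s0..s2})" if "x \<in> {s0..s2}" for x
    proof -
      have "(zeta a0 d k S has_real_derivative zeta' a0 d k S x) (at x)"
        using that s0pos S(2) kp(1) by (intro zeta_deriv) auto
      then have "((\<lambda>x. - zeta a0 d k S x) has_real_derivative - zeta' a0 d k S x) (at x)"
        by (rule DERIV_minus)
      then show ?thesis by (simp add: g1_def g2_def has_field_derivative_at_within)
    qed
    have c2: "continuous_on {s0..s2} g2"
      unfolding g2_def using s0pos S(2) kp(1) by (intro continuous_on_minus zeta'_cont) auto
    note E = ext_C2[OF s02 d1 d2 c2]
    define phi where "phi = (\<lambda>y::real^'n. ext0 s0 s2 g g1 g2 (norm (y - x0)^2))"
    define Dphi where "Dphi = (\<lambda>y::real^'n. (2 * ext1 s0 s2 g1 g2 (norm (y - x0)^2)) *\<^sub>R (y - x0))"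
    define D2phi where "D2phi = (\<lambda>y::real^'n. (2 * ext1 s0 s2 g1 g2 (norm (y - x0)^2)) *\<^sub>R mat 1
        + (4 * ext2 s0 s2 g2 (norm (y - x0)^2)) *\<^sub>R outer (y - x0))"
    have C2: "C2_with phi Dphi D2phi"
      unfolding phi_def Dphi_def D2phi_def by (rule radial_C2) (use E in auto)
    define K where "K = {y::real^'n. s0 \<le> norm (y - x0)^2 \<and> norm (y - x0)^2 \<le> s2}"
    define U where "U = {y::real^'n. s0 < norm (y - x0)^2 \<and> norm (y - x0)^2 < s2}"
    have x1K: "x1 \<in> K" using s01 S(1) by (simp add: K_def s1_def)
    have cK: "compact K"
    proof -
      have "closed K" unfolding K_def
        by (intro closed_Collect_conj closed_Collect_le continuous_intros)
      moreover have "K \<subseteq> cball x0 (sqrt s2)"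
      proof
        fix y assume "y \<in> K"
        then have "norm (y - x0)^2 \<le> s2" by (simp add: K_def)
        then have "norm (y - x0) \<le> sqrt s2" using real_le_rsqrt by blast
        then show "y \<in> cball x0 (sqrt s2)" by (simp add: dist_norm norm_minus_commute)
      qed
      then have "bounded K" by (rule bounded_subset[OF bounded_cball])
      ultimately show ?thesis by (simp add: compact_eq_bounded_closed)
    qed
    have oU: "open U" unfolding U_def
      by (intro open_Collect_conj open_Collect_less continuous_intros)
    have UK: "U \<subseteq> K" by (auto simp: U_def K_def)
    have bd: "phi y \<le> u y" if "y \<in> K" "y \<notin> U" for y
    proof -
      have "norm (y - x0)^2 = s0 \<or> norm (y - x0)^2 = s2" using that by (auto simp: K_def U_def)
      then show ?thesis
      proof
        assume h: "norm (y - x0)^2 = s0"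
        have "phi y = g s0" unfolding phi_def h using s02 by (simp add: ext_mid)
        also have "\<dots> = M + \<delta>" by (simp add: g_def)
        also have "\<dots> \<le> u y" using inner[of y] h by simp
        finally show ?thesis .
      next
        assume h: "norm (y - x0)^2 = s2"
        have "phi y = g s2" unfolding phi_def h using s02 by (simp add: ext_mid)
        also have "\<dots> \<le> M" using S(4) by (simp add: g_def)
        also have "\<dots> \<le> u y" by (rule Mle)
        finally show ?thesis .
      qed
    qed
    have strict: "Gstar p (Dphi y) (D2phi y) < ereal ((u y) powr q + norm (Dphi y) powr \<gamma>)" if "y \<in> U" for y
    proof -
      define s where "s = norm (y - x0)^2"
      define v where "v = y - x0"
      have sI: "s0 < s" "s < s2" using that by (auto simp: U_def s_def)
      have sm: "s \<in> {s0..s2}" using sI by simp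
      have vnz: "v \<noteq> 0" using sI s0pos by (auto simp: s_def v_def)
      define z where "z = zeta a0 d k S s"
      have zpos: "z > 0" by (simp add: z_def zeta_pos)
      have e1: "ext1 s0 s2 g1 g2 (norm (y - x0)^2) = - z"
        unfolding s_def[symmetric] using sm by (simp add: ext_mid g1_def z_def)
      have e2: "ext2 s0 s2 g2 (norm (y - x0)^2) = - zeta' a0 d k S s"
        unfolding s_def[symmetric] using sm by (simp add: ext_mid g2_def)
      have Dp: "Dphi y = (- 2 * z) *\<^sub>R v"
        unfolding Dphi_def e1 v_def by simp
      have D2p: "D2phi y = (- 2 * z) *\<^sub>R mat 1 + (- 4 * zeta' a0 d k S s) *\<^sub>R outer v"
        unfolding D2phi_def e1 e2 v_def by simp
      have Dnz: "Dphi y \<noteq> 0" using Dp zpos vnz by simp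
      have nv: "norm v ^ 2 = s" by (simp add: s_def v_def)
      have "Gstar p (Dphi y) (D2phi y) \<le> ereal (Gop p (Dphi y) (D2phi y))" by (rule Gstar_le[OF Dnz])
      also have "Gop p (Dphi y) (D2phi y) = - (1/p) * ((- 2 * z) * (N + p - 2) + (p - 1) * (- 4 * zeta' a0 d k S s) * s)"
        unfolding Dp D2p using Gop_radial[OF vnz, of "- 2 * z" p "- 2 * z" "- 4 * zeta' a0 d k S s"] zpos p1 nv
        by (simp add: N_def)
      also have "\<dots> = (1/p) * (2 * zeta a0 d k S s * (N + p - 2) + 4 * (p-1) * s * zeta' a0 d k S s)"
        by (simp add: z_def algebra_simps)
      also have "\<dots> < (2 * zeta a0 d k S s * sqrt s) powr (1 + k)"
        using KI[OF p1 kp(1) s0pos _ _ dN kp(3) a0_def] sI S(2) by simp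
      also have "(2 * zeta a0 d k S s * sqrt s) = norm (Dphi y)"
      proof -
        have "sqrt s = norm v" using nv by (intro real_sqrt_unique) auto
        then show ?thesis unfolding Dp using zpos by (simp add: z_def)
      qed
      finally have "Gstar p (Dphi y) (D2phi y) < ereal (norm (Dphi y) powr \<gamma>)" using gk by simp
      moreover have "norm (Dphi y) powr \<gamma> \<le> (u y) powr q + norm (Dphi y) powr \<gamma>" by simp
      ultimately show ?thesis by (meson ereal_less_eq(3) less_le_trans)
    qed
    have "\<forall>y\<in>K. phi y \<le> u y"
      by (rule comparison[OF assms(6) C2 cK _ oU UK]) (use x1K bd strict in auto)
    then have "phi x1 \<le> u x1" using x1K by blast
    moreover have "phi x1 = g s1" unfolding phi_def s1_def[symmetric] using s01 S(1) by (simp add: ext_mid)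
    moreover have "M + \<delta>/2 \<le> g s1" using S(3) by (simp add: g_def)
    ultimately show ?thesis by simp
  qed
  then show False using x1 by simp
qed


end
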